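(* Let $V$ be a complex normed vector space and $x=\{x_n\}_{n=1}^\infty\in l^{\infty}(V)$. If $x$ is strongly almost convergent to $v\in V$, then $v\in\overline{\mathrm{co}}\{x_n:n\in\mathbb{N}\}$, the norm-closure of the convex hull of $\{x_n:n\in\mathbb{N}\}$.
   Context: $l^{\infty}(V)$ is the space of bounded sequences $x=\{x_n\}_{n=1}^\infty$ in $V$ with norm $\|x\|_\infty=\sup_n\|x_n\|_V$. For $v\in V$, $\widetilde v=\{v,v,\dots\}$. $T$ is the left shift: $T\{x_1,x_2,\dots\}=\{x_2,x_3,\dots\}$. A Banach limit functional is a bounded linear functional $L$ on $l^\infty(V)$ with $\|L\|\le1$ and $L(Tx)=L(x)$ for all $x$. A sequence $x\in l^\infty(V)$ is strongly almost convergent to $v\in V$ if $L(x)=L(\widetilde v)$ for every Banach limit functional $L$. *)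

theory Defs
  imports "HOL-Analysis.Analysis"
begin

text \<open>Complex vector spaces: a real vector space with a compatible complex scalar
  multiplication (the HOL distribution has no such class).\<close>
class complex_vector = real_vector +
  fixes scaleC :: "complex \<Rightarrow> 'a \<Rightarrow> 'a"
  assumes scaleC_add_right: "scaleC a (x + y) = scaleC a x + scaleC a y"
    and scaleC_add_left: "scaleC (a + b) x = scaleC a x + scaleC b x"
    and scaleC_scaleC: "scaleC a (scaleC b x) = scaleC (a * b) x"
    and scaleC_one: "scaleC 1 x = x"
    and scaleR_scaleC: "scaleR r x = scaleC (complex_of_real r) x"

class complex_normed_vector = complex_vector + real_normed_vector +
  assumes norm_scaleC: "norm (scaleC a x) = cmod a * norm x"

text \<open>l-infinity(V): bounded sequences (indexed from 0), with sup norm.\<close>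
definition linf :: "(nat \<Rightarrow> 'a::real_normed_vector) set" where
  "linf = {x. bounded (range x)}"

definition sup_norm :: "(nat \<Rightarrow> 'a::real_normed_vector) \<Rightarrow> real" where
  "sup_norm x = (SUP n. norm (x n))"

definition shift :: "(nat \<Rightarrow> 'a) \<Rightarrow> nat \<Rightarrow> 'a" where
  "shift x = (\<lambda>n. x (Suc n))"

definition const_seq :: "'a \<Rightarrow> nat \<Rightarrow> 'a" where
  "const_seq v = (\<lambda>n. v)"

text \<open>Banach limit functional: complex-linear functional on l-infinity(V) with
  operator norm at most 1, invariant under the left shift.  Only its values on
  linf matter.\<close>
definition banach_limit_functional ::
  "((nat \<Rightarrow> 'a::complex_normed_vector) \<Rightarrow> complex) \<Rightarrow> bool" where
  "banach_limit_functional L \<longleftrightarrow>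
     (\<forall>x\<in>linf. \<forall>y\<in>linf. L (\<lambda>n. x n + y n) = L x + L y) \<and>
     (\<forall>c. \<forall>x\<in>linf. L (\<lambda>n. scaleC c (x n)) = c * L x) \<and>
     (\<forall>x\<in>linf. cmod (L x) \<le> sup_norm x) \<and>
     (\<forall>x\<in>linf. L (shift x) = L x)"

definition strongly_almost_convergent ::
  "(nat \<Rightarrow> 'a::complex_normed_vector) \<Rightarrow> 'a \<Rightarrow> bool" where
  "strongly_almost_convergent x v \<longleftrightarrow>
     (\<forall>L. banach_limit_functional L \<longrightarrow> L x = L (const_seq v))"

end

theory Submission
  imports Defs "HOL-Library.Function_Algebras"
begin


definition sublin_on :: "'a::real_vector set \<Rightarrow> ('a \<Rightarrow> real) \<Rightarrow> bool" where
  "sublin_on S q \<longleftrightarrow> (\<forall>x\<in>S. \<forall>y\<in>S. q (x + y) \<le> q x + q y) \<and>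
     (\<forall>c>0. \<forall>x\<in>S. q (c *\<^sub>R x) \<le> c * q x) \<and> q 0 \<le> 0"

lemma inf2_le:
  fixes g h :: "_ \<Rightarrow> real"
  assumes "I \<noteq> {}" "J \<noteq> {}" "bdd_below (g ` I)" "bdd_below (h ` J)"
    and "\<And>a b. a \<in> I \<Longrightarrow> b \<in> J \<Longrightarrow> z \<le> g a + h b"
  shows "z \<le> (INF a\<in>I. g a) + (INF b\<in>J. h b)"
proof -
  have "z - (INF a\<in>I. g a) \<le> h b" if "b \<in> J" for b
  proof -
    have "z - h b \<le> (INF a\<in>I. g a)"
      by (rule cINF_greatest[OF assms(1)]) (use assms(5) that in force)
    then show ?thesis by linarith
  qed
  then have "z - (INF a\<in>I. g a) \<le> (INF b\<in>J. h b)"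
    by (intro cINF_greatest[OF assms(2)])
  then show ?thesis by linarith
qed

lemma inf_homog_le:
  fixes g :: "_ \<Rightarrow> real"
  assumes "I \<noteq> {}" "c > 0" "\<And>a. a \<in> I \<Longrightarrow> z \<le> c * g a"
  shows "z \<le> c * (INF a\<in>I. g a)"
proof -
  have "z / c \<le> (INF a\<in>I. g a)"
    by (rule cINF_greatest[OF assms(1)]) (use assms in \<open>simp add: divide_le_eq mult.commute\<close>)
  then show ?thesis using assms(2) by (simp add: divide_le_eq mult.commute)
qed

lemma sublin_basic:
  assumes S: "subspace S" and q: "sublin_on S q"
  shows "q 0 = 0" and "\<And>y. y \<in> S \<Longrightarrow> - q (- y) \<le> q y"
    and "\<And>c x. c > 0 \<Longrightarrow> x \<in> S \<Longrightarrow> c * q x \<le> q (c *\<^sub>R x)"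
proof -
  have 0: "0 \<in> S" using S by (simp add: subspace_0)
  have "q (0 + 0) \<le> q 0 + q 0" using q 0 unfolding sublin_on_def by blast
  then show q0: "q 0 = 0" using q unfolding sublin_on_def by simp
  show "- q (- y) \<le> q y" if "y \<in> S" for y
  proof -
    have "- y \<in> S" using S that by (simp add: subspace_neg)
    then have "q (y + - y) \<le> q y + q (- y)" using q that unfolding sublin_on_def by blast
    then show ?thesis using q0 by simp
  qed
  show "c * q x \<le> q (c *\<^sub>R x)" if "c > 0" "x \<in> S" for c x
  proof -
    have "c *\<^sub>R x \<in> S" using S that by (simp add: subspace_scale)
    have h: "\<forall>c>0. \<forall>x\<in>S. q (c *\<^sub>R x) \<le> c * q x" using q unfolding sublin_on_def by blast
    have "q (inverse c *\<^sub>R (c *\<^sub>R x)) \<le> inverse c * q (c *\<^sub>R x)"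
      by (rule h[rule_format]) (use that \<open>c *\<^sub>R x \<in> S\<close> in auto)
    then have "q x \<le> inverse c * q (c *\<^sub>R x)" using that by simp
    then show ?thesis using that by (simp add: field_simps)
  qed
qed

lemma hahn_banach_minorant:
  fixes S :: "'a::real_vector set"
  assumes S: "subspace S" and p: "sublin_on S p"
  shows "\<exists>f. (\<forall>x\<in>S. \<forall>y\<in>S. f (x + y) = f x + f y) \<and> (\<forall>c. \<forall>x\<in>S. f (c *\<^sub>R x) = c * f x)
             \<and> (\<forall>x\<in>S. f x \<le> p x)"
proof -
  define A where "A = {q. sublin_on S q \<and> (\<forall>y\<in>S. q y \<le> p y) \<and> (\<forall>y. y \<notin> S \<longrightarrow> q y = 0)}"
  define r where "r = {(q1, q2). q1 \<in> A \<and> q2 \<in> A \<and> (\<forall>y\<in>S. q2 y \<le> q1 y)}"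
  have negS: "- y \<in> S" if "y \<in> S" for y using S that by (simp add: subspace_neg)
  have addS: "x + y \<in> S" if "x \<in> S" "y \<in> S" for x y using S that by (simp add: subspace_add)
  have scS: "c *\<^sub>R y \<in> S" if "y \<in> S" for c y using S that by (simp add: subspace_scale)
  have 0: "0 \<in> S" using S by (simp add: subspace_0)
  have lowb: "- p (- y) \<le> q y" if "q \<in> A" "y \<in> S" for q y
  proof -
    have "- q (- y) \<le> q y" using sublin_basic(2)[OF S _ that(2)] that(1) unfolding A_def by blast
    moreover have "q (- y) \<le> p (- y)" using that negS unfolding A_def by blast
    ultimately show ?thesis by linarith
  qed
  have Field: "Field r = A"
    unfolding r_def Field_def by auto
  have po: "Partial_order r"
    unfolding partial_order_on_def preorder_on_def Field refl_on_def trans_def antisym_def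
  proof (intro conjI)
    show "r \<subseteq> A \<times> A" unfolding r_def by auto
    show "\<forall>x\<in>A. (x, x) \<in> r" unfolding r_def by auto
    show "\<forall>x y z. (x, y) \<in> r \<longrightarrow> (y, z) \<in> r \<longrightarrow> (x, z) \<in> r" unfolding r_def by force
    show "\<forall>x y. (x, y) \<in> r \<longrightarrow> (y, x) \<in> r \<longrightarrow> x = y"
    proof (intro allI impI)
      fix x y assume "(x, y) \<in> r" "(y, x) \<in> r"
      then show "x = y" unfolding r_def A_def by (force intro!: ext order.antisym)
    qed
  qed
  have pA: "(\<lambda>y. if y \<in> S then p y else 0) \<in> A"
    using p 0 addS scS unfolding A_def sublin_on_def by auto
  have ub: "\<exists>u\<in>Field r. \<forall>a\<in>C. (a, u) \<in> r" if C: "C \<in> Chains r" for C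
  proof (cases "C = {}")
    case True then show ?thesis using pA Field by auto
  next
    case False
    have CA: "C \<subseteq> A" using C unfolding Chains_def r_def by blast
    have bdd: "bdd_below ((\<lambda>q. q y) ` C)" if "y \<in> S" for y
      using lowb CA that by (intro bdd_belowI[of _ "- p (- y)"]) auto
    have cmp: "\<forall>y\<in>S. q2 y \<le> q1 y \<or> (\<forall>y\<in>S. q1 y \<le> q2 y)" if "q1 \<in> C" "q2 \<in> C" for q1 q2
      using C that unfolding Chains_def r_def by blast
    define u where "u y = (if y \<in> S then (INF q\<in>C. q y) else 0)" for y
    have ule: "u y \<le> q y" if "q \<in> C" "y \<in> S" for q y
      unfolding u_def using that cINF_lower[OF bdd[OF that(2)] that(1)] by simp
    have uA: "u \<in> A"
      unfolding A_def sublin_on_def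
    proof (intro CollectI conjI ballI allI impI)
      fix x y assume xy: "x \<in> S" "y \<in> S"
      have "u (x + y) \<le> (INF q\<in>C. q x) + (INF q\<in>C. q y)"
      proof (rule inf2_le[OF False False bdd[OF xy(1)] bdd[OF xy(2)]])
        fix q1 q2 assume q: "q1 \<in> C" "q2 \<in> C"
        have s1: "sublin_on S q1" "sublin_on S q2" using q CA unfolding A_def by auto
        have a1: "q1 (x + y) \<le> q1 x + q1 y" "q2 (x + y) \<le> q2 x + q2 y"
          using s1 xy unfolding sublin_on_def by auto
        have "u (x + y) \<le> q1 (x + y)" "u (x + y) \<le> q2 (x + y)"
          using ule q addS xy by auto
        show "u (x + y) \<le> q1 x + q2 y"
        proof (cases "\<forall>y\<in>S. q2 y \<le> q1 y")
          case True
          then have "q2 x \<le> q1 x" using xy by blast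
          then show ?thesis using \<open>u (x + y) \<le> q2 (x + y)\<close> a1 by linarith
        next
          case False
          then have "\<forall>y\<in>S. q1 y \<le> q2 y" using cmp[OF q] by blast
          then have "q1 y \<le> q2 y" using xy by blast
          then show ?thesis using \<open>u (x + y) \<le> q1 (x + y)\<close> a1 by linarith
        qed
      qed
      then show "u (x + y) \<le> u x + u y" using xy unfolding u_def by simp
    next
      fix c :: real and x assume c: "c > 0" and x: "x \<in> S"
      have "u (c *\<^sub>R x) \<le> c * (INF q\<in>C. q x)"
      proof (rule inf_homog_le[OF False c])
        fix q assume q: "q \<in> C"
        then have "q (c *\<^sub>R x) \<le> c * q x" using CA c x unfolding A_def sublin_on_def by blast
        then show "u (c *\<^sub>R x) \<le> c * q x" using ule[OF q scS[OF x, of c]] by linarith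
      qed
      then show "u (c *\<^sub>R x) \<le> c * u x" using x unfolding u_def by simp
    next
      obtain q where q: "q \<in> C" using False by blast
      have "q 0 \<le> 0" using q CA unfolding A_def sublin_on_def by blast
      then show "u 0 \<le> 0" using ule[OF q 0] by linarith
    next
      fix y assume y: "y \<in> S"
      obtain q where q: "q \<in> C" using False by blast
      have "q y \<le> p y" using q CA y unfolding A_def by blast
      then show "u y \<le> p y" using ule[OF q y] by linarith
    next
      fix y assume "y \<notin> S" then show "u y = 0" unfolding u_def by simp
    qed
    have "(a, u) \<in> r" if "a \<in> C" for a
      using that CA uA ule unfolding r_def by auto
    then show ?thesis using uA unfolding Field by blast
  qed
  obtain m where mA: "m \<in> A" and mmin: "\<And>a. a \<in> A \<Longrightarrow> (m, a) \<in> r \<Longrightarrow> a = m"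
    using Zorns_po_lemma[OF po ub] Field by blast
  have ms: "sublin_on S m" and mp: "\<forall>y\<in>S. m y \<le> p y" using mA unfolding A_def by auto
  have m0: "m 0 = 0" using sublin_basic(1)[OF S ms] .
  have madd: "m (y + z) = m y + m z" if y: "y \<in> S" and z: "z \<in> S" for y z
  proof -
    define T where "T = {0::real..}"
    have Tne: "T \<noteq> {}" unfolding T_def by auto
    define g where "g y t = m (y + t *\<^sub>R z) - t * m z" for y t
    have glow: "- m (- y) \<le> g y t" if "y \<in> S" "t \<in> T" for y t
    proof -
      have "m ((y + t *\<^sub>R z) + (- y)) \<le> m (y + t *\<^sub>R z) + m (- y)"
        using ms that z addS scS negS unfolding sublin_on_def by blast
      then have "m (t *\<^sub>R z) \<le> m (y + t *\<^sub>R z) + m (- y)" by simp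
      moreover have "t * m z \<le> m (t *\<^sub>R z)"
      proof (cases "t = 0")
        case True then show ?thesis using m0 by simp
      next
        case False then show ?thesis using that(2) z sublin_basic(3)[OF S ms] unfolding T_def by simp
      qed
      ultimately show ?thesis unfolding g_def by linarith
    qed
    have bdd: "bdd_below (g y ` T)" if "y \<in> S" for y
      using glow that by (intro bdd_belowI[of _ "- m (- y)"]) auto
    define q' where "q' y = (if y \<in> S then (INF t\<in>T. g y t) else 0)" for y
    have q'le: "q' y \<le> g y t" if "y \<in> S" "t \<in> T" for y t
      unfolding q'_def using that cINF_lower[OF bdd[OF that(1)] that(2)] by simp
    have q'm: "q' y \<le> m y" if "y \<in> S" for y
      using q'le[OF that, of 0] unfolding g_def T_def by simp
    have q'A: "q' \<in> A"
      unfolding A_def sublin_on_def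
    proof (intro CollectI conjI ballI allI impI)
      fix x y assume xy: "x \<in> S" "y \<in> S"
      have "q' (x + y) \<le> (INF t\<in>T. g x t) + (INF t\<in>T. g y t)"
      proof (rule inf2_le[OF Tne Tne bdd[OF xy(1)] bdd[OF xy(2)]])
        fix t1 t2 assume t: "t1 \<in> T" "t2 \<in> T"
        have "t1 + t2 \<in> T" using t unfolding T_def by auto
        then have "q' (x + y) \<le> g (x + y) (t1 + t2)" using q'le addS xy by blast
        also have "\<dots> = m ((x + t1 *\<^sub>R z) + (y + t2 *\<^sub>R z)) - t1 * m z - t2 * m z"
          unfolding g_def by (simp add: algebra_simps scaleR_add_left)
        also have "\<dots> \<le> g x t1 + g y t2"
        proof -
          have "m ((x + t1 *\<^sub>R z) + (y + t2 *\<^sub>R z)) \<le> m (x + t1 *\<^sub>R z) + m (y + t2 *\<^sub>R z)"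
            using ms xy z addS scS unfolding sublin_on_def by blast
          then show ?thesis unfolding g_def by linarith
        qed
        finally show "q' (x + y) \<le> g x t1 + g y t2" .
      qed
      then show "q' (x + y) \<le> q' x + q' y" using xy addS unfolding q'_def by simp
    next
      fix c :: real and x assume c: "c > 0" and x: "x \<in> S"
      have "q' (c *\<^sub>R x) \<le> c * (INF t\<in>T. g x t)"
      proof (rule inf_homog_le[OF Tne c])
        fix t assume t: "t \<in> T"
        have "c * t \<in> T" using t c unfolding T_def by auto
        then have "q' (c *\<^sub>R x) \<le> g (c *\<^sub>R x) (c * t)" using q'le scS x by blast
        also have "\<dots> = m (c *\<^sub>R (x + t *\<^sub>R z)) - c * (t * m z)"
          unfolding g_def by (simp add: algebra_simps)
        also have "\<dots> \<le> c * g x t"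
        proof -
          have "m (c *\<^sub>R (x + t *\<^sub>R z)) \<le> c * m (x + t *\<^sub>R z)"
            using ms c x z addS scS unfolding sublin_on_def by blast
          then show ?thesis unfolding g_def by (simp add: right_diff_distrib)
        qed
        finally show "q' (c *\<^sub>R x) \<le> c * g x t" .
      qed
      then show "q' (c *\<^sub>R x) \<le> c * q' x" using x unfolding q'_def by simp
    next
      show "q' 0 \<le> 0" using q'm[OF 0] m0 by simp
    next
      fix y assume y: "y \<in> S"
      show "q' y \<le> p y" using q'm[OF y] mp y by force
    next
      fix y assume "y \<notin> S" then show "q' y = 0" unfolding q'_def by simp
    qed
    have "(m, q') \<in> r" using mA q'A q'm unfolding r_def by auto
    then have "q' = m" using mmin q'A by blast
    then have "m y \<le> g y 1" using q'le[OF y, of 1] unfolding T_def by simp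
    then have "m y + m z \<le> m (y + z)" unfolding g_def by simp
    moreover have "m (y + z) \<le> m y + m z" using ms y z unfolding sublin_on_def by blast
    ultimately show ?thesis by linarith
  qed
  have mneg: "m (- y) = - m y" if "y \<in> S" for y
    using madd[OF that negS[OF that]] m0 by simp
  have mhom: "m (c *\<^sub>R x) = c * m x" if x: "x \<in> S" for c x
  proof -
    have pos: "m (c *\<^sub>R x) = c * m x" if "c > 0" for c
      using sublin_basic(3)[OF S ms that x] ms that x unfolding sublin_on_def by force
    show ?thesis
    proof (cases c "0::real" rule: linorder_cases)
      case less
      have "m (c *\<^sub>R x) = m (- ((- c) *\<^sub>R x))" by simp
      also have "\<dots> = - m ((- c) *\<^sub>R x)" using mneg scS x by blast
      also have "\<dots> = c * m x" using pos[of "- c"] less by simp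
      finally show ?thesis .
    qed (use m0 pos in auto)
  qed
  show ?thesis using madd mhom mp by blast
qed



lemma sep_functional:
  fixes H :: "'a::real_normed_vector set"
  assumes cvx: "convex H" and ne: "H \<noteq> {}" and vH: "v \<notin> closure H"
  shows "\<exists>f \<delta>. \<delta> > 0 \<and> (\<forall>a b. f (a + b) = f a + f b) \<and> (\<forall>c a. f (c *\<^sub>R a) = c * f a)
     \<and> (\<forall>a. \<bar>f a\<bar> \<le> norm a) \<and> (\<forall>c\<in>H. f v + \<delta> \<le> f c)"
proof -
  define d where "d = infdist v H"
  have dpos: "d > 0"
    using in_closure_iff_infdist_zero[OF ne, of v] vH infdist_nonneg[of v H] unfolding d_def by linarith
  define \<delta> where "\<delta> = d / 2"
  have \<delta>pos: "\<delta> > 0" using dpos unfolding \<delta>_def by simp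
  have distH: "d \<le> norm (c - v)" if "c \<in> H" for c
    using infdist_le[OF that, of v] unfolding d_def by (simp add: dist_norm norm_minus_commute)
  obtain c0 where c0: "c0 \<in> H" using ne by blast
  define Z where "Z = H \<times> {0::real..}"
  have Zne: "Z \<noteq> {}" using c0 unfolding Z_def by auto
  define tm where "tm y z = norm (y + snd z *\<^sub>R (fst z - v)) - snd z * \<delta>" for y z
  have tmlow: "- norm y \<le> tm y z" if zZ: "z \<in> Z" for y z
  proof -
    obtain c t where z: "z = (c, t)" "c \<in> H" "t \<ge> 0" using zZ unfolding Z_def atLeast_def by blast
    have "norm (t *\<^sub>R (c - v)) - norm y \<le> norm (y + t *\<^sub>R (c - v))"
      by (metis add.commute norm_diff_ineq add_diff_cancel_left' norm_triangle_ineq4 diff_le_eq le_diff_eq norm_minus_commute)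
    moreover have "norm (t *\<^sub>R (c - v)) = t * norm (c - v)" using z by simp
    moreover have "t * \<delta> \<le> t * norm (c - v)"
      using distH[OF z(2)] z(3) dpos unfolding \<delta>_def by (intro mult_left_mono) auto
    ultimately show ?thesis unfolding tm_def z by (simp add: abs_of_nonneg[OF z(3)])
  qed
  have bdd: "bdd_below (tm y ` Z)" for y
    using tmlow by (intro bdd_belowI[of _ "- norm y"]) auto
  define p where "p y = (INF z\<in>Z. tm y z)" for y
  have ple: "p y \<le> tm y z" if "z \<in> Z" for y z
    unfolding p_def using cINF_lower[OF bdd that] .
  have pnorm: "p y \<le> norm y" for y
    using ple[of "(c0, 0)" y] c0 unfolding Z_def tm_def by simp
  have psub: "sublin_on UNIV p"
    unfolding sublin_on_def
  proof (intro conjI ballI allI impI)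
    fix x y :: 'a
    show "p (x + y) \<le> p x + p y" unfolding p_def[of x] p_def[of y]
    proof (rule inf2_le[OF Zne Zne bdd bdd])
      fix z1 z2 assume z: "z1 \<in> Z" "z2 \<in> Z"
      obtain c1 t1 where z1: "z1 = (c1, t1)" "c1 \<in> H" "t1 \<ge> 0" using z(1) unfolding Z_def atLeast_def by blast
      obtain c2 t2 where z2: "z2 = (c2, t2)" "c2 \<in> H" "t2 \<ge> 0" using z(2) unfolding Z_def atLeast_def by blast
      show "p (x + y) \<le> tm x z1 + tm y z2"
      proof (cases "t1 + t2 = 0")
        case True
        then have "t1 = 0" "t2 = 0" using z1 z2 by auto
        then have "p (x + y) \<le> norm (x + y)" using pnorm by blast
        also have "\<dots> \<le> norm x + norm y" by (rule norm_triangle_ineq)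
        finally show ?thesis unfolding tm_def z1 z2 using \<open>t1 = 0\<close> \<open>t2 = 0\<close> by simp
      next
        case False
        define t where "t = t1 + t2"
        have tpos: "t > 0" using False z1 z2 unfolding t_def by auto
        define c where "c = (t1 / t) *\<^sub>R c1 + (t2 / t) *\<^sub>R c2"
        have cH: "c \<in> H" unfolding c_def
          using convexD[OF cvx z1(2) z2(2), of "t1 / t" "t2 / t"] z1 z2 tpos
          by (simp add: t_def add_divide_distrib[symmetric])
        have tc: "t *\<^sub>R c = t1 *\<^sub>R c1 + t2 *\<^sub>R c2"
        proof -
          have "t *\<^sub>R c = (t * (t1 / t)) *\<^sub>R c1 + (t * (t2 / t)) *\<^sub>R c2"
            by (simp only: c_def scaleR_add_right scaleR_scaleR)
          then show ?thesis using tpos by simp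
        qed
        have "t *\<^sub>R (c - v) = t *\<^sub>R c - t *\<^sub>R v" by (simp add: scaleR_diff_right)
        also have "\<dots> = t1 *\<^sub>R (c1 - v) + t2 *\<^sub>R (c2 - v)"
          by (subst tc) (simp add: t_def algebra_simps)
        finally have eq: "t *\<^sub>R (c - v) = t1 *\<^sub>R (c1 - v) + t2 *\<^sub>R (c2 - v)" .
        have "(c, t) \<in> Z" using cH tpos unfolding Z_def by auto
        then have "p (x + y) \<le> norm (x + y + t *\<^sub>R (c - v)) - t * \<delta>"
          using ple unfolding tm_def by fastforce
        also have "\<dots> = norm ((x + t1 *\<^sub>R (c1 - v)) + (y + t2 *\<^sub>R (c2 - v))) - t1 * \<delta> - t2 * \<delta>"
          by (subst eq) (simp add: t_def algebra_simps)
        also have "\<dots> \<le> tm x z1 + tm y z2"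
          unfolding tm_def z1 z2 using norm_triangle_ineq[of "x + t1 *\<^sub>R (c1 - v)" "y + t2 *\<^sub>R (c2 - v)"]
          by simp
        finally show ?thesis .
      qed
    qed
  next
    fix c :: real and x :: 'a assume c: "c > 0"
    show "p (c *\<^sub>R x) \<le> c * p x" unfolding p_def[of x]
    proof (rule inf_homog_le[OF Zne c])
      fix z assume z: "z \<in> Z"
      obtain c1 t1 where z1: "z = (c1, t1)" "c1 \<in> H" "t1 \<ge> 0" using z unfolding Z_def atLeast_def by blast
      have "(c1, c * t1) \<in> Z" using z1 c unfolding Z_def by auto
      then have "p (c *\<^sub>R x) \<le> tm (c *\<^sub>R x) (c1, c * t1)" by (rule ple)
      also have "\<dots> = norm (c *\<^sub>R (x + t1 *\<^sub>R (c1 - v))) - c * (t1 * \<delta>)"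
        unfolding tm_def by (simp add: algebra_simps)
      also have "\<dots> = c * tm x z" unfolding tm_def z1 using c by (simp add: right_diff_distrib)
      finally show "p (c *\<^sub>R x) \<le> c * tm x z" .
    qed
  next
    show "p 0 \<le> 0" using pnorm[of 0] by simp
  qed
  obtain f where fadd: "\<forall>a b. f (a + b) = f a + f b" and fhom: "\<forall>c a. f (c *\<^sub>R a) = c * f a"
    and fp: "\<forall>a. f a \<le> p a"
    using hahn_banach_minorant[OF subspace_UNIV psub] by blast
  have fneg: "f (- a) = - f a" for a using fhom[rule_format, of "-1" a] by simp
  have fb: "\<bar>f a\<bar> \<le> norm a" for a
    using fp[rule_format, of a] fp[rule_format, of "- a"] pnorm[of a] pnorm[of "- a"] fneg[of a] by auto
  have fc: "f v + \<delta> \<le> f c" if "c \<in> H" for c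
  proof -
    have "(c, 1) \<in> Z" using that unfolding Z_def by auto
    then have "p (- (c - v)) \<le> - \<delta>" using ple[of "(c, 1)" "- (c - v)"] unfolding tm_def by simp
    then have "f (- (c - v)) \<le> - \<delta>" using fp by (meson order_trans)
    moreover have "f (- (c - v)) = f v - f c"
      using fadd[rule_format, of v "- c"] fneg[of c] by (simp add: algebra_simps)
    ultimately show ?thesis by linarith
  qed
  show ?thesis using \<delta>pos fadd fhom fb fc by blast
qed



instantiation "fun" :: (type, real_vector) real_vector
begin
definition scaleR_fun :: "real \<Rightarrow> ('a \<Rightarrow> 'b) \<Rightarrow> 'a \<Rightarrow> 'b" where
  "scaleR_fun r f = (\<lambda>x. r *\<^sub>R f x)"
instance by standard (auto simp: scaleR_fun_def fun_eq_iff scaleR_add_right scaleR_add_left)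
end

lemma scaleR_fun_apply [simp]: "(r *\<^sub>R f) x = r *\<^sub>R f x"
  by (simp add: scaleR_fun_def)

definition bdd_seq :: "(nat \<Rightarrow> real) \<Rightarrow> bool" where
  "bdd_seq s \<longleftrightarrow> (\<exists>B. \<forall>n. \<bar>s n\<bar> \<le> B)"

definition ces :: "(nat \<Rightarrow> real) \<Rightarrow> nat \<Rightarrow> real" where
  "ces s n = (\<Sum>j\<le>n. s j) / real (Suc n)"

lemma ces_le: assumes "\<forall>j. s j \<le> B" shows "ces s n \<le> B"
proof -
  have "(\<Sum>j\<le>n. s j) \<le> real (card {..n}) * B" by (rule sum_bounded_above) (use assms in auto)
  then show ?thesis unfolding ces_def by (simp add: divide_le_eq mult.commute)
qed

lemma ces_abs: assumes "\<forall>j. \<bar>s j\<bar> \<le> B" shows "\<bar>ces s n\<bar> \<le> B"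
proof -
  have "ces s n \<le> B" by (rule ces_le) (use assms abs_le_D1 in blast)
  moreover have "ces (\<lambda>j. - s j) n \<le> B" by (rule ces_le) (use assms abs_le_D2 in force)
  moreover have "ces (\<lambda>j. - s j) n = - ces s n" unfolding ces_def by (simp add: sum_negf)
  ultimately show ?thesis by linarith
qed

lemma ces_add: "ces (\<lambda>j. s j + t j) n = ces s n + ces t n"
  unfolding ces_def by (simp add: sum.distrib add_divide_distrib)

lemma ces_scale: "ces (\<lambda>j. c * s j) n = c * ces s n"
  unfolding ces_def by (simp add: sum_distrib_left[symmetric])

lemma bdd_below_absI: assumes "\<And>N. \<bar>f N\<bar> \<le> (B::real)" shows "bdd_below (range f)"
proof (rule bdd_belowI[of _ "- B"])
  fix x assume "x \<in> range f"
  then obtain N where "x = f N" by blast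
  then show "- B \<le> x" using abs_le_D2[OF assms[of N]] by linarith
qed

definition Tl :: "(nat \<Rightarrow> real) \<Rightarrow> nat \<Rightarrow> real" where
  "Tl s N = (SUP n\<in>{N..}. ces s n)"

definition Pl :: "(nat \<Rightarrow> real) \<Rightarrow> real" where
  "Pl s = (INF N. Tl s N)"

lemma Tl_props:
  assumes "\<forall>j. \<bar>s j\<bar> \<le> B"
  shows "\<And>n N. N \<le> n \<Longrightarrow> ces s n \<le> Tl s N" and "\<And>N. \<bar>Tl s N\<bar> \<le> B"
    and "\<And>N. Pl s \<le> Tl s N" and "\<And>N M. (\<And>n. N \<le> n \<Longrightarrow> ces s n \<le> M) \<Longrightarrow> Tl s N \<le> M"
proof -
  have bda: "bdd_above (ces s ` {N..})" for N
    using ces_abs[OF assms] by (intro bdd_aboveI[of _ B]) (auto dest: abs_le_D1)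
  show up: "ces s n \<le> Tl s N" if "N \<le> n" for n N
    unfolding Tl_def using that by (intro cSUP_upper bda) auto
  show le: "Tl s N \<le> M" if "\<And>n. N \<le> n \<Longrightarrow> ces s n \<le> M" for N M
    unfolding Tl_def using that by (intro cSUP_least) auto
  show absT: "\<bar>Tl s N\<bar> \<le> B" for N
  proof -
    have cb: "\<bar>ces s n\<bar> \<le> B" for n by (rule ces_abs[OF assms])
    have "Tl s N \<le> B" by (rule le) (use cb abs_le_D1 in blast)
    moreover have "- B \<le> Tl s N" using up[of N N] ces_abs[OF assms, of N] by linarith
    ultimately show ?thesis by linarith
  qed
  show "Pl s \<le> Tl s N" for N
    unfolding Pl_def by (rule cINF_lower[OF bdd_below_absI[OF absT]]) simp
qed

lemma bdd_seqE: assumes "bdd_seq s" obtains B where "\<forall>j. \<bar>s j\<bar> \<le> B"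
  using assms unfolding bdd_seq_def by blast

lemma Pl_inf_bdd: assumes "bdd_seq s" shows "bdd_below (range (Tl s))"
proof -
  obtain B where B: "\<forall>j. \<bar>s j\<bar> \<le> B" using assms unfolding bdd_seq_def by blast
  show ?thesis using Tl_props(2)[OF B] by (rule bdd_below_absI)
qed

lemma Pl_zero:
  assumes d: "bdd_seq d" and K: "\<And>n. \<bar>\<Sum>j\<le>n. d j\<bar> \<le> K"
  shows "Pl d \<le> 0"
proof (rule field_le_epsilon)
  fix e :: real assume e: "0 < e"
  obtain B where B: "\<forall>j. \<bar>d j\<bar> \<le> B" using d unfolding bdd_seq_def by blast
  have K0: "0 \<le> K" using K[of 0] by linarith
  obtain N where N: "K < real N * e" using ex_less_of_nat_mult[OF e] by blast
  have "Tl d N \<le> e"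
  proof (rule Tl_props(4)[OF B])
    fix n assume n: "N \<le> n"
    have "ces d n \<le> K / real (Suc n)"
      unfolding ces_def using K[of n] by (intro divide_right_mono) auto
    also have "\<dots> \<le> e"
    proof -
      have "K \<le> real (Suc n) * e"
        using N n e by (smt (verit) mult_right_mono of_nat_le_iff of_nat_Suc)
      then show ?thesis by (simp add: divide_le_eq mult.commute)
    qed
    finally show "ces d n \<le> e" .
  qed
  then show "Pl d \<le> 0 + e" using Tl_props(3)[OF B, of N] by linarith
qed

lemma banach_limit_real:
  "\<exists>F :: (nat \<Rightarrow> real) \<Rightarrow> real.
     (\<forall>s t. bdd_seq s \<longrightarrow> bdd_seq t \<longrightarrow> F (\<lambda>n. s n + t n) = F s + F t) \<and>
     (\<forall>c s. bdd_seq s \<longrightarrow> F (\<lambda>n. c * s n) = c * F s) \<and>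
     (\<forall>s B. bdd_seq s \<longrightarrow> (\<forall>n. s n \<le> B) \<longrightarrow> F s \<le> B) \<and>
     (\<forall>s m. bdd_seq s \<longrightarrow> (\<forall>n. m \<le> s n) \<longrightarrow> m \<le> F s) \<and>
     (\<forall>s. bdd_seq s \<longrightarrow> F (\<lambda>n. s (Suc n)) = F s)"
proof -
  define S where "S = {s. bdd_seq s}"
  have addS: "bdd_seq (\<lambda>n. s n + t n)" if st: "bdd_seq s" "bdd_seq t" for s t
  proof -
    obtain B1 where b1: "\<forall>j. \<bar>s j\<bar> \<le> B1" using st(1) unfolding bdd_seq_def by blast
    obtain B2 where b2: "\<forall>j. \<bar>t j\<bar> \<le> B2" using st(2) unfolding bdd_seq_def by blast
    have "\<bar>s n + t n\<bar> \<le> B1 + B2" for n using b1[rule_format, of n] b2[rule_format, of n] by (smt (verit))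
    then show ?thesis unfolding bdd_seq_def by blast
  qed
  have scS: "bdd_seq (\<lambda>n. c * s n)" if st: "bdd_seq s" for s c
  proof -
    obtain B1 where B1: "\<forall>j. \<bar>s j\<bar> \<le> B1" using st unfolding bdd_seq_def by blast
    have "\<bar>c * s n\<bar> \<le> \<bar>c\<bar> * B1" for n using B1[rule_format, of n] by (simp add: abs_mult mult_left_mono)
    then show ?thesis unfolding bdd_seq_def by blast
  qed
  have plus_eq: "s + t = (\<lambda>n. s n + t n)" for s t :: "nat \<Rightarrow> real" by (simp add: fun_eq_iff)
  have sc_eq: "c *\<^sub>R s = (\<lambda>n. c * s n)" for c and s :: "nat \<Rightarrow> real" by (simp add: fun_eq_iff)
  have subS: "subspace S"
    unfolding subspace_def S_def
    using addS scS by (auto simp: plus_eq sc_eq bdd_seq_def)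
  have Psub: "sublin_on S Pl"
    unfolding sublin_on_def
  proof (intro conjI ballI allI impI)
    fix s t assume st: "s \<in> S" "t \<in> S"
    obtain B1 where B1: "\<forall>j. \<bar>s j\<bar> \<le> B1" using st(1) unfolding S_def unfolding bdd_seq_def by blast
    obtain B2 where B2: "\<forall>j. \<bar>t j\<bar> \<le> B2" using st(2) unfolding S_def unfolding bdd_seq_def by blast
    have B12: "\<forall>j. \<bar>(s + t) j\<bar> \<le> B1 + B2"
    proof
      fix j
      have "\<bar>s j\<bar> \<le> B1" "\<bar>t j\<bar> \<le> B2" using B1 B2 by auto
      then show "\<bar>(s + t) j\<bar> \<le> B1 + B2" by (smt (verit) plus_fun_apply)
    qed
    show "Pl (s + t) \<le> Pl s + Pl t" unfolding Pl_def[of s] Pl_def[of t]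
    proof (rule inf2_le)
      show "bdd_below (range (Tl s))" "bdd_below (range (Tl t))"
        using st Pl_inf_bdd unfolding S_def by auto
    next
      fix N1 N2 :: nat
      let ?M = "max N1 N2"
      have "Pl (s + t) \<le> Tl (s + t) ?M" by (rule Tl_props(3)[OF B12])
      also have "\<dots> \<le> Tl s N1 + Tl t N2"
      proof (rule Tl_props(4)[OF B12])
        fix n assume n: "?M \<le> n"
        have "ces (s + t) n = ces s n + ces t n" unfolding plus_eq by (rule ces_add)
        also have "\<dots> \<le> Tl s N1 + Tl t N2"
          using Tl_props(1)[OF B1, of N1 n] Tl_props(1)[OF B2, of N2 n] n by simp
        finally show "ces (s + t) n \<le> Tl s N1 + Tl t N2" .
      qed
      finally show "Pl (s + t) \<le> Tl s N1 + Tl t N2" .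
    qed auto
  next
    fix c :: real and s assume c: "c > 0" and s: "s \<in> S"
    obtain B1 where B1: "\<forall>j. \<bar>s j\<bar> \<le> B1" using s unfolding S_def unfolding bdd_seq_def by blast
    have Bc: "\<forall>j. \<bar>(c *\<^sub>R s) j\<bar> \<le> c * B1" using B1 c by (simp add: abs_mult)
    show "Pl (c *\<^sub>R s) \<le> c * Pl s" unfolding Pl_def[of s]
    proof (rule inf_homog_le[OF _ c])
      fix N
      have "Pl (c *\<^sub>R s) \<le> Tl (c *\<^sub>R s) N" by (rule Tl_props(3)[OF Bc])
      also have "\<dots> \<le> c * Tl s N"
      proof (rule Tl_props(4)[OF Bc])
        fix n assume "N \<le> n"
        then have "ces s n \<le> Tl s N" by (rule Tl_props(1)[OF B1])
        then show "ces (c *\<^sub>R s) n \<le> c * Tl s N"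
          unfolding sc_eq ces_scale using c by simp
      qed
      finally show "Pl (c *\<^sub>R s) \<le> c * Tl s N" .
    qed auto
  next
    have B0: "\<forall>j. \<bar>(0::nat\<Rightarrow>real) j\<bar> \<le> 0" by simp
    have "Tl 0 0 \<le> 0" by (rule Tl_props(4)[OF B0]) (simp add: ces_def)
    then show "Pl 0 \<le> 0" using Tl_props(3)[OF B0, of 0] by linarith
  qed
  obtain F where Fadd: "\<forall>x\<in>S. \<forall>y\<in>S. F (x + y) = F x + F y"
    and Fhom: "\<forall>c. \<forall>x\<in>S. F (c *\<^sub>R x) = c * F x" and FP: "\<forall>x\<in>S. F x \<le> Pl x"
    using hahn_banach_minorant[OF subS Psub] by blast
  have Fadd': "F (\<lambda>n. s n + t n) = F s + F t" if "bdd_seq s" "bdd_seq t" for s t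
    using Fadd that unfolding S_def plus_eq by auto
  have Fhom': "F (\<lambda>n. c * s n) = c * F s" if "bdd_seq s" for c s
    using Fhom that unfolding S_def sc_eq by auto
  have Fneg: "F (\<lambda>n. - s n) = - F s" if "bdd_seq s" for s
    using Fhom'[OF that, of "-1"] by simp
  have Fub: "F s \<le> B" if s: "bdd_seq s" and B: "\<forall>n. s n \<le> B" for s B
  proof -
    obtain B1 where B1: "\<forall>j. \<bar>s j\<bar> \<le> B1" using s unfolding bdd_seq_def by blast
    have "Tl s 0 \<le> B" by (rule Tl_props(4)[OF B1]) (use B ces_le in blast)
    then show ?thesis using FP s Tl_props(3)[OF B1, of 0] unfolding S_def by force
  qed
  have Flb: "m \<le> F s" if s: "bdd_seq s" and m: "\<forall>n. m \<le> s n" for s m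
  proof -
    have "F (\<lambda>n. - s n) \<le> - m" using Fub[of "\<lambda>n. - s n" "- m"] scS[OF s, of "-1"] m by simp
    then show ?thesis using Fneg[OF s] by linarith
  qed
  have Fsh: "F (\<lambda>n. s (Suc n)) = F s" if s: "bdd_seq s" for s
  proof -
    obtain B where B: "\<forall>j. \<bar>s j\<bar> \<le> B" using s unfolding bdd_seq_def by blast
    have sh: "bdd_seq (\<lambda>n. s (Suc n))" using B unfolding bdd_seq_def by blast
    have tel: "(\<Sum>j\<le>n. s j - s (Suc j)) = s 0 - s (Suc n)" for n
      by (induction n) auto
    define d where "d = (\<lambda>n. s n + - s (Suc n))"
    define d' where "d' = (\<lambda>n. s (Suc n) + - s n)"
    have bb: "\<bar>s n + - s (Suc n)\<bar> \<le> 2 * B" "\<bar>s (Suc n) + - s n\<bar> \<le> 2 * B" for n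
      using B[rule_format, of n] B[rule_format, of "Suc n"] by (smt (verit))+
    have dS: "bdd_seq d" "bdd_seq d'" unfolding d_def d'_def bdd_seq_def
      using bb by blast+
    have "\<bar>\<Sum>j\<le>n. d j\<bar> \<le> 2 * B" for n
      using tel[of n] B[rule_format, of 0] B[rule_format, of "Suc n"] unfolding d_def by simp
    then have "Pl d \<le> 0" using Pl_zero dS by blast
    then have Fd0: "F d \<le> 0" using FP dS unfolding S_def by force
    have ns: "bdd_seq (\<lambda>n. - s (Suc n))" using scS[OF sh, of "-1"] by simp
    have ns': "bdd_seq (\<lambda>n. - s n)" using scS[OF s, of "-1"] by simp
    have "F d = F s + F (\<lambda>n. - s (Suc n))" unfolding d_def by (rule Fadd'[OF s ns])
    also have "\<dots> = F s - F (\<lambda>n. s (Suc n))" using Fneg[OF sh] by simp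
    finally have Fdeq: "F d = F s - F (\<lambda>n. s (Suc n))" .
    have "\<bar>\<Sum>j\<le>n. d' j\<bar> \<le> 2 * B" for n
    proof -
      have "(\<Sum>j\<le>n. d' j) = - (\<Sum>j\<le>n. s j - s (Suc j))" unfolding d'_def by (simp add: sum_negf[symmetric])
      then show ?thesis using tel[of n] B[rule_format, of 0] B[rule_format, of "Suc n"] by simp
    qed
    then have "Pl d' \<le> 0" using Pl_zero dS by blast
    then have Fd'0: "F d' \<le> 0" using FP dS unfolding S_def by force
    have Fd'eq: "F d' = F (\<lambda>n. s (Suc n)) - F s"
    proof -
      have "F d' = F (\<lambda>n. s (Suc n)) + F (\<lambda>n. - s n)" unfolding d'_def by (rule Fadd'[OF sh ns'])
      also have "\<dots> = F (\<lambda>n. s (Suc n)) - F s" using Fneg[OF s] by simp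
      finally show ?thesis .
    qed
    show ?thesis using Fd0 Fdeq Fd'0 Fd'eq by linarith
  qed
  show ?thesis
    apply (rule exI[of _ F])
    using Fadd' Fhom' Fub Flb Fsh by blast
qed



lemma bdd_seq_add: "bdd_seq s \<Longrightarrow> bdd_seq t \<Longrightarrow> bdd_seq (\<lambda>n. s n + t n)"
  unfolding bdd_seq_def by (metis abs_triangle_ineq add_mono order_trans)

lemma bdd_seq_scale: "bdd_seq s \<Longrightarrow> bdd_seq (\<lambda>n. c * s n)"
  unfolding bdd_seq_def by (metis abs_ge_zero abs_mult mult_left_mono)

lemma fsc:
  fixes f :: "'a::complex_vector \<Rightarrow> real"
  assumes fadd: "\<forall>a b. f (a + b) = f a + f b" and fhom: "\<forall>c a. f (c *\<^sub>R a) = c * f a"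
  shows "f (scaleC c w) = Re c * f w + Im c * f (scaleC \<i> w)"
proof -
  have "scaleC c w = scaleC (complex_of_real (Re c) + complex_of_real (Im c) * \<i>) w"
    using complex_eq[of c] by (simp add: mult.commute)
  also have "\<dots> = scaleC (complex_of_real (Re c)) w + scaleC (complex_of_real (Im c)) (scaleC \<i> w)"
    by (simp add: scaleC_add_left scaleC_scaleC)
  also have "\<dots> = Re c *\<^sub>R w + Im c *\<^sub>R scaleC \<i> w" by (simp add: scaleR_scaleC)
  finally show ?thesis using fadd fhom by simp
qed

lemma scaleC_neg1: "scaleC (-1) (w::'a::complex_vector) = - w"
  using scaleR_scaleC[of "-1" w] by simp

theorem mainTheorem15:
  fixes x :: "nat \<Rightarrow> 'a::complex_normed_vector" and v :: 'a
  assumes "x \<in> linf"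
    and "strongly_almost_convergent x v"
  shows "v \<in> closure (convex hull (range x))"
proof (rule ccontr)
  assume vH: "v \<notin> closure (convex hull (range x))"
  obtain f \<delta> where \<delta>: "\<delta> > 0" and fadd: "\<forall>a b. f (a + b) = f a + f b"
    and fhom: "\<forall>c a. f (c *\<^sub>R a) = c * f a" and fb: "\<forall>a. \<bar>f a\<bar> \<le> norm a"
    and fsep: "\<forall>c\<in>convex hull (range x). f v + \<delta> \<le> f c"
    using sep_functional[OF convex_convex_hull _ vH] by (simp add: convex_hull_eq_empty) blast
  obtain F where Fadd: "\<forall>s t. bdd_seq s \<longrightarrow> bdd_seq t \<longrightarrow> F (\<lambda>n. s n + t n) = F s + F t"
    and Fhom: "\<forall>c s. bdd_seq s \<longrightarrow> F (\<lambda>n. c * s n) = c * F s"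
    and Fub: "\<forall>s B. bdd_seq s \<longrightarrow> (\<forall>n. s n \<le> B) \<longrightarrow> F s \<le> B"
    and Flb: "\<forall>s m. bdd_seq s \<longrightarrow> (\<forall>n. m \<le> s n) \<longrightarrow> m \<le> F s"
    and Fsh: "\<forall>s. bdd_seq s \<longrightarrow> F (\<lambda>n. s (Suc n)) = F s"
    using banach_limit_real by blast
  define g where "g w = complex_of_real (f w) - \<i> * complex_of_real (f (scaleC \<i> w))" for w
  have Reg: "Re (g w) = f w" and Img: "Im (g w) = - f (scaleC \<i> w)" for w unfolding g_def by simp_all
  have normi: "norm (scaleC \<i> w) = norm w" for w :: 'a by (simp add: norm_scaleC)
  have gadd: "g (a + b) = g a + g b" for a b
    unfolding g_def using fadd by (simp add: scaleC_add_right algebra_simps)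
  have gsc: "g (scaleC c w) = c * g w" for c w
  proof -
    have e1: "f (scaleC c w) = Re c * f w + Im c * f (scaleC \<i> w)" by (rule fsc[OF fadd fhom])
    have "f (scaleC \<i> (scaleC c w)) = f (scaleC (\<i> * c) w)" by (simp add: scaleC_scaleC)
    also have "\<dots> = - Im c * f w + Re c * f (scaleC \<i> w)" using fsc[OF fadd fhom, of "\<i> * c" w] by simp
    finally have e2: "f (scaleC \<i> (scaleC c w)) = - Im c * f w + Re c * f (scaleC \<i> w)" .
    show ?thesis by (rule complex_eqI) (simp_all add: g_def e1 e2)
  qed
  define \<Lambda> where "\<Lambda> t = complex_of_real (F (\<lambda>n. Re (t n))) + \<i> * complex_of_real (F (\<lambda>n. Im (t n)))"
    for t :: "nat \<Rightarrow> complex"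
  define L where "L y = \<Lambda> (\<lambda>n. g (y n)) / 2" for y :: "nat \<Rightarrow> 'a"
  have ReL: "Re (L y) = F (\<lambda>n. f (y n)) / 2" for y unfolding L_def \<Lambda>_def by (simp add: Reg)
  have ImL: "Im (L y) = F (\<lambda>n. - f (scaleC \<i> (y n))) / 2" for y unfolding L_def \<Lambda>_def by (simp add: Img)
  have bdd: "bdd_seq (\<lambda>n. f (y n))" "bdd_seq (\<lambda>n. - f (scaleC \<i> (y n)))"
    and bnd: "\<forall>n. norm (y n) \<le> sup_norm y" if y: "y \<in> linf" for y
  proof -
    have bd: "bounded (range y)" using y unfolding linf_def by simp
    then obtain B where B: "\<forall>n. norm (y n) \<le> B" unfolding bounded_iff by blast
    have "\<bar>f (y n)\<bar> \<le> B" for n using fb[rule_format, of "y n"] B[rule_format, of n] by linarith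
    then show "bdd_seq (\<lambda>n. f (y n))" unfolding bdd_seq_def by blast
    have "\<bar>- f (scaleC \<i> (y n))\<bar> \<le> B" for n
      using fb[rule_format, of "scaleC \<i> (y n)"] B[rule_format, of n] normi[of "y n"] by simp
    then show "bdd_seq (\<lambda>n. - f (scaleC \<i> (y n)))" unfolding bdd_seq_def by blast
    have "bdd_above (range (\<lambda>n. norm (y n)))" using B by (intro bdd_aboveI[of _ B]) auto
    then show "\<forall>n. norm (y n) \<le> sup_norm y" unfolding sup_norm_def by (auto intro: cSUP_upper)
  qed
  have BL: "banach_limit_functional L"
    unfolding banach_limit_functional_def
  proof (intro conjI ballI allI)
    fix y z :: "nat \<Rightarrow> 'a" assume y: "y \<in> linf" and z: "z \<in> linf"
    show "L (\<lambda>n. y n + z n) = L y + L z"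
    proof (rule complex_eqI)
      have "F (\<lambda>n. f (y n + z n)) = F (\<lambda>n. f (y n)) + F (\<lambda>n. f (z n))"
        using Fadd bdd(1)[OF y] bdd(1)[OF z] fadd by simp
      then show "Re (L (\<lambda>n. y n + z n)) = Re (L y + L z)" by (simp add: ReL)
      have "F (\<lambda>n. - f (scaleC \<i> (y n + z n))) = F (\<lambda>n. (- f (scaleC \<i> (y n))) + (- f (scaleC \<i> (z n))))"
        using fadd by (simp add: scaleC_add_right)
      also have "\<dots> = F (\<lambda>n. - f (scaleC \<i> (y n))) + F (\<lambda>n. - f (scaleC \<i> (z n)))"
        by (rule Fadd[rule_format, OF bdd(2)[OF y] bdd(2)[OF z]])
      finally show "Im (L (\<lambda>n. y n + z n)) = Im (L y + L z)" by (simp add: ImL)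
    qed
  next
    fix c :: complex and y :: "nat \<Rightarrow> 'a" assume y: "y \<in> linf"
    define a where "a = (\<lambda>n. f (y n))"
    define b where "b = (\<lambda>n. - f (scaleC \<i> (y n)))"
    have ab: "bdd_seq a" "bdd_seq b" using bdd[OF y] unfolding a_def b_def by auto
    have Reg': "Re (g (scaleC c (y n))) = Re c * a n + (- Im c) * b n" for n
      unfolding gsc a_def b_def by (simp add: Reg Img)
    have Img': "Im (g (scaleC c (y n))) = Im c * a n + Re c * b n" for n
      unfolding gsc a_def b_def by (simp add: Reg Img)
    have FRe: "F (\<lambda>n. Re (g (scaleC c (y n)))) = Re c * F a - Im c * F b"
    proof -
      have "F (\<lambda>n. Re (g (scaleC c (y n)))) = F (\<lambda>n. Re c * a n + (- Im c) * b n)"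
        by (simp only: Reg')
      also have "\<dots> = F (\<lambda>n. Re c * a n) + F (\<lambda>n. (- Im c) * b n)"
        by (rule Fadd[rule_format, OF bdd_seq_scale[OF ab(1)] bdd_seq_scale[OF ab(2)]])
      also have "\<dots> = Re c * F a + (- Im c) * F b"
        using Fhom[rule_format, OF ab(1), of "Re c"] Fhom[rule_format, OF ab(2), of "- Im c"] by simp
      finally show ?thesis by simp
    qed
    have FIm: "F (\<lambda>n. Im (g (scaleC c (y n)))) = Im c * F a + Re c * F b"
    proof -
      have "F (\<lambda>n. Im (g (scaleC c (y n)))) = F (\<lambda>n. Im c * a n + Re c * b n)"
        by (simp only: Img')
      also have "\<dots> = F (\<lambda>n. Im c * a n) + F (\<lambda>n. Re c * b n)"
        by (rule Fadd[rule_format, OF bdd_seq_scale[OF ab(1)] bdd_seq_scale[OF ab(2)]])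
      also have "\<dots> = Im c * F a + Re c * F b"
        using Fhom[rule_format, OF ab(1), of "Im c"] Fhom[rule_format, OF ab(2), of "Re c"] by simp
      finally show ?thesis by simp
    qed
    have ra: "F a = 2 * Re (L y)" "F b = 2 * Im (L y)" unfolding ReL ImL a_def b_def by simp_all
    have "Re (L (\<lambda>n. scaleC c (y n))) = (Re c * F a - Im c * F b) / 2"
      unfolding L_def \<Lambda>_def using FRe by simp
    then have r1: "Re (L (\<lambda>n. scaleC c (y n))) = Re c * Re (L y) - Im c * Im (L y)"
      unfolding ra by simp
    have "Im (L (\<lambda>n. scaleC c (y n))) = (Im c * F a + Re c * F b) / 2"
      unfolding L_def \<Lambda>_def using FIm by simp
    then have r2: "Im (L (\<lambda>n. scaleC c (y n))) = Im c * Re (L y) + Re c * Im (L y)"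
      unfolding ra by simp
    show "L (\<lambda>n. scaleC c (y n)) = c * L y"
      by (intro complex_eqI) (simp_all add: r1 r2)
  next
    fix y :: "nat \<Rightarrow> 'a" assume y: "y \<in> linf"
    define M where "M = sup_norm y"
    have a1: "\<bar>F (\<lambda>n. f (y n))\<bar> \<le> M"
    proof -
      have h: "\<bar>f (y n)\<bar> \<le> M" for n
        using fb[rule_format, of "y n"] bnd[OF y] unfolding M_def by (meson order_trans)
      have "\<forall>n. f (y n) \<le> M" "\<forall>n. - M \<le> f (y n)"
        using abs_le_D1[OF h] abs_le_D2[OF h] by (simp_all add: minus_le_iff)
      then have "F (\<lambda>n. f (y n)) \<le> M" "- M \<le> F (\<lambda>n. f (y n))"
        using Fub[rule_format, OF bdd(1)[OF y]] Flb[rule_format, OF bdd(1)[OF y]] by blast+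
      then show ?thesis by linarith
    qed
    have a2: "\<bar>F (\<lambda>n. - f (scaleC \<i> (y n)))\<bar> \<le> M"
    proof -
      have h: "\<bar>- f (scaleC \<i> (y n))\<bar> \<le> M" for n
        using fb[rule_format, of "scaleC \<i> (y n)"] bnd[OF y] normi[of "y n"] unfolding M_def
        by (metis abs_minus_cancel order_trans)
      have "\<forall>n. - f (scaleC \<i> (y n)) \<le> M" "\<forall>n. - M \<le> - f (scaleC \<i> (y n))"
        using abs_le_D1[OF h] abs_le_D2[OF h] by (simp_all add: minus_le_iff)
      then have "F (\<lambda>n. - f (scaleC \<i> (y n))) \<le> M" "- M \<le> F (\<lambda>n. - f (scaleC \<i> (y n)))"
        using Fub[rule_format, OF bdd(2)[OF y]] Flb[rule_format, OF bdd(2)[OF y]] by blast+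
      then show ?thesis by linarith
    qed
    have "cmod (L y) \<le> \<bar>Re (L y)\<bar> + \<bar>Im (L y)\<bar>" by (rule cmod_le)
    also have "\<dots> \<le> M" unfolding ReL ImL using a1 a2 by simp
    finally show "cmod (L y) \<le> sup_norm y" unfolding M_def .
  next
    fix y :: "nat \<Rightarrow> 'a" assume y: "y \<in> linf"
    have "F (\<lambda>n. f (y (Suc n))) = F (\<lambda>n. f (y n))" using Fsh bdd(1)[OF y] by blast
    moreover have "F (\<lambda>n. - f (scaleC \<i> (y (Suc n)))) = F (\<lambda>n. - f (scaleC \<i> (y n)))"
      using Fsh bdd(2)[OF y] by blast
    ultimately show "L (shift y) = L y" unfolding shift_def by (intro complex_eqI) (simp_all add: ReL ImL)
  qed
  then have eq: "L x = L (const_seq v)" using assms(2) unfolding strongly_almost_convergent_def by blast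
  have "\<forall>n. f v + \<delta> \<le> f (x n)"
    using fsep hull_inc[of _ "range x" convex] by blast
  then have "f v + \<delta> \<le> F (\<lambda>n. f (x n))"
    using Flb[rule_format, OF bdd(1)[OF assms(1)]] by blast
  moreover have "F (\<lambda>n. f v) = f v"
  proof -
    have bc: "bdd_seq (\<lambda>n. f v)" unfolding bdd_seq_def by blast
    have "F (\<lambda>n. f v) \<le> f v" "f v \<le> F (\<lambda>n. f v)"
      using Fub[rule_format, OF bc, of "f v"] Flb[rule_format, OF bc, of "f v"] by simp_all
    then show ?thesis by linarith
  qed
  moreover have "Re (L x) = Re (L (const_seq v))" using eq by simp
  ultimately show False using \<delta> unfolding ReL const_seq_def by simp
qed


end
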